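(* In the setting described in the context, the vector fields $F_1,F_2$ on $S\setminus\Gamma(S)$ satisfy $$[F_1,F_2]=-\big(b\,h(F_1)+\eta(F_1)\big)F_1-b\,F_2 .$$
   Context: $M$ is a three-dimensional manifold with contact distribution $D=\ker\omega$ ($\omega\wedge{\mathrm d}\omega\ne0$) and smooth fibre inner product $g$ on $D$, with ${\mathrm d}\omega|_D=-\operatorname{vol}_g$. $X_0$ is the Reeb vector field (${\mathrm d}\omega(X_0,\cdot)\equiv0$, $\omega(X_0)\equiv1$), $(X_1,X_2)$ a global oriented $g$-orthonormal frame of $D$; then $[X_0,X_i]\in D$ for $i=1,2$. $S=\{u=0\}$ with $u\in C^2(M)$, ${\mathrm d}u\ne0$ on $S$; $\Gamma(S)=\{x\in S:(X_1u)(x)=(X_2u)(x)=0\}$. On $S\setminus\Gamma(S)$ define $F_1=\dfrac{(X_2u)X_1-(X_1u)X_2}{\sqrt{(X_1u)^2+(X_2u)^2}}$, $F_2=\dfrac{(X_0u)(X_1u)X_1+(X_0u)(X_2u)X_2}{(X_1u)^2+(X_2u)^2}-X_0$, and $b=\dfrac{X_0u}{\sqrt{(X_1u)^2+(X_2u)^2}}$. Let $J\colon D\to D$ be defined by $g(X,J(Y))={\mathrm d}\omega(X,Y)$ for $X,Y\in D$ (so $J(X_1)=X_2$, $J(X_2)=-X_1$). For a unit-length vector field $X$ in $D$ set $h(X)=-g([X,J(X)]|_D,X)$, where $[X,J(X)]|_D$ is the $D$-component of $[X,J(X)]$ in the splitting $TM=D\oplus\mathbb{R}X_0$, and $\eta(X)=-g([X_0,X],X)$.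 *)

theory Defs
  imports "HOL-Analysis.Analysis"
begin

text \<open>Local-coordinate model: the 3-manifold M is an open set U of real^3.
Vector fields are maps real^3 => real^3, 1-forms are covector fields
(omega_x(v) = w x \<bullet> v).\<close>

type_synonym pt = "real^3"

definition pd :: "3 \<Rightarrow> (pt \<Rightarrow> real) \<Rightarrow> pt \<Rightarrow> real" where
  "pd i f x = frechet_derivative f (at x) (axis i 1)"

primrec Ck_on :: "nat \<Rightarrow> pt set \<Rightarrow> (pt \<Rightarrow> real) \<Rightarrow> bool" where
  "Ck_on 0 U f = continuous_on U f"
| "Ck_on (Suc k) U f = ((\<forall>x\<in>U. f differentiable (at x)) \<and> (\<forall>i. Ck_on k U (pd i f)))"

definition smooth_fun :: "pt set \<Rightarrow> (pt \<Rightarrow> real) \<Rightarrow> bool" where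
  "smooth_fun U f = (\<forall>k. Ck_on k U f)"

definition smooth_vf :: "pt set \<Rightarrow> (pt \<Rightarrow> pt) \<Rightarrow> bool" where
  "smooth_vf U X = (\<forall>j. smooth_fun U (\<lambda>x. X x $ j))"

definition dder :: "(pt \<Rightarrow> pt) \<Rightarrow> (pt \<Rightarrow> real) \<Rightarrow> pt \<Rightarrow> real" where
  "dder X f x = frechet_derivative f (at x) (X x)"

text \<open>Lie bracket [X,Y] (so that [X,Y]f = X(Yf) - Y(Xf)).\<close>
definition lie :: "(pt \<Rightarrow> pt) \<Rightarrow> (pt \<Rightarrow> pt) \<Rightarrow> pt \<Rightarrow> pt" where
  "lie X Y x = frechet_derivative Y (at x) (X x) - frechet_derivative X (at x) (Y x)"

definition dform :: "(pt \<Rightarrow> pt) \<Rightarrow> pt \<Rightarrow> pt \<Rightarrow> pt \<Rightarrow> real" where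
  "dform w x a b = (frechet_derivative w (at x) a) \<bullet> b - (frechet_derivative w (at x) b) \<bullet> a"

definition wedge3 :: "(pt \<Rightarrow> pt) \<Rightarrow> pt \<Rightarrow> pt \<Rightarrow> pt \<Rightarrow> pt \<Rightarrow> real" where
  "wedge3 w x a b c = (w x \<bullet> a) * dform w x b c - (w x \<bullet> b) * dform w x a c
                      + (w x \<bullet> c) * dform w x a b"

definition Dfib :: "(pt \<Rightarrow> pt) \<Rightarrow> pt \<Rightarrow> pt set" where
  "Dfib w x = {v. w x \<bullet> v = 0}"

definition Jmap :: "(pt \<Rightarrow> pt) \<Rightarrow> (pt \<Rightarrow> pt \<Rightarrow> pt \<Rightarrow> real) \<Rightarrow> pt \<Rightarrow> pt \<Rightarrow> pt" where
  "Jmap w g x a = (THE c. c \<in> Dfib w x \<and> (\<forall>v\<in>Dfib w x. g x v c = dform w x v a))"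

definition projD :: "(pt \<Rightarrow> pt) \<Rightarrow> (pt \<Rightarrow> pt) \<Rightarrow> pt \<Rightarrow> pt \<Rightarrow> pt" where
  "projD w X0 x v = v - (w x \<bullet> v) *\<^sub>R X0 x"

definition hfun :: "(pt \<Rightarrow> pt) \<Rightarrow> (pt \<Rightarrow> pt \<Rightarrow> pt \<Rightarrow> real) \<Rightarrow> (pt \<Rightarrow> pt) \<Rightarrow> (pt \<Rightarrow> pt) \<Rightarrow> pt \<Rightarrow> real" where
  "hfun w g X0 X x = - g x (projD w X0 x (lie X (\<lambda>y. Jmap w g y (X y)) x)) (X x)"

definition etafun :: "(pt \<Rightarrow> pt \<Rightarrow> pt \<Rightarrow> real) \<Rightarrow> (pt \<Rightarrow> pt) \<Rightarrow> (pt \<Rightarrow> pt) \<Rightarrow> pt \<Rightarrow> real" where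
  "etafun g X0 X x = - g x (lie X0 X x) (X x)"

definition volg :: "(pt \<Rightarrow> pt \<Rightarrow> pt \<Rightarrow> real) \<Rightarrow> (pt \<Rightarrow> pt) \<Rightarrow> (pt \<Rightarrow> pt) \<Rightarrow> pt \<Rightarrow> pt \<Rightarrow> pt \<Rightarrow> real" where
  "volg g X1 X2 x a b = g x a (X1 x) * g x b (X2 x) - g x a (X2 x) * g x b (X1 x)"

definition F1fld :: "(pt \<Rightarrow> pt) \<Rightarrow> (pt \<Rightarrow> pt) \<Rightarrow> (pt \<Rightarrow> real) \<Rightarrow> pt \<Rightarrow> pt" where
  "F1fld X1 X2 u x = (1 / sqrt ((dder X1 u x)\<^sup>2 + (dder X2 u x)\<^sup>2)) *\<^sub>R
      (dder X2 u x *\<^sub>R X1 x - dder X1 u x *\<^sub>R X2 x)"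

definition F2fld :: "(pt \<Rightarrow> pt) \<Rightarrow> (pt \<Rightarrow> pt) \<Rightarrow> (pt \<Rightarrow> pt) \<Rightarrow> (pt \<Rightarrow> real) \<Rightarrow> pt \<Rightarrow> pt" where
  "F2fld X0 X1 X2 u x = (1 / ((dder X1 u x)\<^sup>2 + (dder X2 u x)\<^sup>2)) *\<^sub>R
      ((dder X0 u x * dder X1 u x) *\<^sub>R X1 x + (dder X0 u x * dder X2 u x) *\<^sub>R X2 x) - X0 x"

definition bfun :: "(pt \<Rightarrow> pt) \<Rightarrow> (pt \<Rightarrow> pt) \<Rightarrow> (pt \<Rightarrow> pt) \<Rightarrow> (pt \<Rightarrow> real) \<Rightarrow> pt \<Rightarrow> real" where
  "bfun X0 X1 X2 u x = dder X0 u x / sqrt ((dder X1 u x)\<^sup>2 + (dder X2 u x)\<^sup>2)"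

end

theory Submission
  imports Defs
begin



lemma fd_add:
  fixes f g :: "'a::real_normed_vector \<Rightarrow> 'b::real_normed_vector"
  assumes "f differentiable at x" "g differentiable at x"
  shows "frechet_derivative (\<lambda>y. f y + g y) (at x) v = frechet_derivative f (at x) v + frechet_derivative g (at x) v"
proof -
  have "((\<lambda>y. f y + g y) has_derivative (\<lambda>v. frechet_derivative f (at x) v + frechet_derivative g (at x) v)) (at x)"
    using assms by (intro has_derivative_add) (simp_all add: frechet_derivative_works[symmetric])
  from frechet_derivative_at[OF this] show ?thesis by metis
qed

lemma fd_diff:
  fixes f g :: "'a::real_normed_vector \<Rightarrow> 'b::real_normed_vector"
  assumes "f differentiable at x" "g differentiable at x"
  shows "frechet_derivative (\<lambda>y. f y - g y) (at x) v = frechet_derivative f (at x) v - frechet_derivative g (at x) v"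
proof -
  have "((\<lambda>y. f y - g y) has_derivative (\<lambda>v. frechet_derivative f (at x) v - frechet_derivative g (at x) v)) (at x)"
    using assms by (intro has_derivative_diff) (simp_all add: frechet_derivative_works[symmetric])
  from frechet_derivative_at[OF this] show ?thesis by metis
qed

lemma fd_scaleR:
  fixes f :: "'a::real_normed_vector \<Rightarrow> real" and g :: "'a \<Rightarrow> 'b::real_normed_vector"
  assumes "f differentiable at x" "g differentiable at x"
  shows "frechet_derivative (\<lambda>y. f y *\<^sub>R g y) (at x) v = f x *\<^sub>R frechet_derivative g (at x) v + frechet_derivative f (at x) v *\<^sub>R g x"
proof -
  have "((\<lambda>y. f y *\<^sub>R g y) has_derivative (\<lambda>v. f x *\<^sub>R frechet_derivative g (at x) v + frechet_derivative f (at x) v *\<^sub>R g x)) (at x)"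
    using assms by (intro has_derivative_scaleR) (simp_all add: frechet_derivative_works[symmetric])
  from frechet_derivative_at[OF this] show ?thesis by metis
qed

lemma fd_mult:
  fixes f g :: "'a::real_normed_vector \<Rightarrow> real"
  assumes "f differentiable at x" "g differentiable at x"
  shows "frechet_derivative (\<lambda>y. f y * g y) (at x) v = f x * frechet_derivative g (at x) v + frechet_derivative f (at x) v * g x"
proof -
  have "((\<lambda>y. f y * g y) has_derivative (\<lambda>v. f x * frechet_derivative g (at x) v + frechet_derivative f (at x) v * g x)) (at x)"
    using assms by (intro has_derivative_mult) (simp_all add: frechet_derivative_works[symmetric])
  from frechet_derivative_at[OF this] show ?thesis by metis
qed

lemma fd_inner:
  fixes f g :: "'a::real_normed_vector \<Rightarrow> 'b::real_inner"
  assumes "f differentiable at x" "g differentiable at x"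
  shows "frechet_derivative (\<lambda>y. f y \<bullet> g y) (at x) v = f x \<bullet> frechet_derivative g (at x) v + frechet_derivative f (at x) v \<bullet> g x"
proof -
  have "((\<lambda>y. f y \<bullet> g y) has_derivative (\<lambda>v. f x \<bullet> frechet_derivative g (at x) v + frechet_derivative f (at x) v \<bullet> g x)) (at x)"
    using assms by (intro has_derivative_inner) (simp_all add: frechet_derivative_works[symmetric])
  from frechet_derivative_at[OF this] show ?thesis by metis
qed

lemma fd_local_const:
  assumes "open U" "x \<in> U" "\<And>y. y \<in> U \<Longrightarrow> f y = k"
  shows "frechet_derivative f (at x) v = 0"
proof -
  have "((\<lambda>y. k) has_derivative (\<lambda>v. 0)) (at x)" by simp
  then have "(f has_derivative (\<lambda>v. 0)) (at x)"
    by (rule has_derivative_transform_within_open[OF _ assms(1,2)]) (use assms(3) in auto)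
  from frechet_derivative_at[OF this] show ?thesis by metis
qed

lemma fd_lin:
  assumes "f differentiable at x"
  shows "frechet_derivative f (at x) (a *\<^sub>R u + b *\<^sub>R v) = a *\<^sub>R frechet_derivative f (at x) u + b *\<^sub>R frechet_derivative f (at x) v"
    "frechet_derivative f (at x) (u - v) = frechet_derivative f (at x) u - frechet_derivative f (at x) v"
    "frechet_derivative f (at x) (u + v) = frechet_derivative f (at x) u + frechet_derivative f (at x) v"
    "frechet_derivative f (at x) (a *\<^sub>R u) = a *\<^sub>R frechet_derivative f (at x) u"
    "frechet_derivative f (at x) 0 = 0"
  using linear_frechet_derivative[OF assms]
  by (simp_all add: linear_add linear_diff linear_scale linear_0)

lemma diff_vf:
  fixes X :: "pt \<Rightarrow> pt"
  assumes "\<And>j. (\<lambda>y. X y $ j) differentiable at x"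
  shows "X differentiable at x"
  unfolding differentiable_componentwise_within[where f=X]
  using assms by (auto simp: Basis_vec_def cart_eq_inner_axis[symmetric])



lemma deriv_line:
  fixes f :: "pt \<Rightarrow> real"
  assumes "f differentiable at (q + s *\<^sub>R e)"
  shows "((\<lambda>t. f (q + t *\<^sub>R e)) has_real_derivative frechet_derivative f (at (q + s *\<^sub>R e)) e) (at s)"
proof -
  have l: "((\<lambda>t. q + t *\<^sub>R e) has_derivative (\<lambda>h. h *\<^sub>R e)) (at s)"
    by (auto intro!: derivative_eq_intros)
  have f: "(f has_derivative frechet_derivative f (at (q + s *\<^sub>R e))) (at (q + s *\<^sub>R e))"
    using assms frechet_derivative_works by blast
  have "((f \<circ> (\<lambda>t. q + t *\<^sub>R e)) has_derivative (frechet_derivative f (at (q + s *\<^sub>R e)) \<circ> (\<lambda>h. h *\<^sub>R e))) (at s)"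
    by (rule diff_chain_at[OF l f])
  moreover have "(frechet_derivative f (at (q + s *\<^sub>R e)) \<circ> (\<lambda>h. h *\<^sub>R e)) = (*) (frechet_derivative f (at (q + s *\<^sub>R e)) e)"
    using linear_frechet_derivative[OF assms] by (auto simp: fun_eq_iff linear_scale)
  ultimately show ?thesis by (simp add: has_field_derivative_def o_def)
qed

lemma Ck2_D:
  assumes "Ck_on 2 U u"
  shows "\<forall>x\<in>U. u differentiable at x" "\<And>i. \<forall>x\<in>U. pd i u differentiable at x"
    "\<And>i j. continuous_on U (pd j (pd i u))"
  using assms by (simp_all add: numeral_2_eq_2)

lemma delta_mvt:
  fixes u :: "pt \<Rightarrow> real"
  assumes C2: "Ck_on 2 U u" and t: "t > 0" and sub: "cball p (2*t) \<subseteq> U"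
  shows "\<exists>q. dist q p \<le> 2*t \<and>
    u (p + t *\<^sub>R axis i 1 + t *\<^sub>R axis j 1) - u (p + t *\<^sub>R axis i 1) - u (p + t *\<^sub>R axis j 1) + u p
      = t^2 * pd j (pd i u) q"
proof -
  note D = Ck2_D[OF C2]
  let ?ei = "axis i 1 :: pt" and ?ej = "axis j 1 :: pt"
  have nei: "norm ?ei = 1" "norm ?ej = 1" by simp_all
  have inU: "p + s *\<^sub>R ?ei + r *\<^sub>R ?ej \<in> U" if "0 \<le> s" "s \<le> t" "0 \<le> r" "r \<le> t" for s r
  proof -
    have "norm (s *\<^sub>R ?ei + r *\<^sub>R ?ej) \<le> norm (s *\<^sub>R ?ei) + norm (r *\<^sub>R ?ej)" by (rule norm_triangle_ineq)
    also have "\<dots> \<le> 2 * t" using that nei by simp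
    finally have nn: "norm (s *\<^sub>R ?ei + r *\<^sub>R ?ej) \<le> 2 * t" .
    have "dist p (p + s *\<^sub>R ?ei + r *\<^sub>R ?ej) = norm (s *\<^sub>R ?ei + r *\<^sub>R ?ej)"
      unfolding dist_norm by (metis add.assoc add_diff_cancel_left' norm_minus_commute)
    then have "p + s *\<^sub>R ?ei + r *\<^sub>R ?ej \<in> cball p (2*t)" using nn by (simp only: mem_cball)
    then show ?thesis using sub by blast
  qed
  define \<phi> where "\<phi> s = u (p + t *\<^sub>R ?ej + s *\<^sub>R ?ei) - u (p + s *\<^sub>R ?ei)" for s
  have d\<phi>: "DERIV \<phi> s :> (pd i u (p + t *\<^sub>R ?ej + s *\<^sub>R ?ei) - pd i u (p + s *\<^sub>R ?ei))"
    if "0 \<le> s" "s \<le> t" for s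
  proof -
    have i1: "p + t *\<^sub>R ?ej + s *\<^sub>R ?ei \<in> U" using inU[of s t] that t by (simp add: algebra_simps)
    have i2: "p + s *\<^sub>R ?ei \<in> U" using inU[of s 0] that t by simp
    show ?thesis unfolding \<phi>_def pd_def
      by (intro DERIV_diff deriv_line) (use D(1) i1 i2 in auto)
  qed
  obtain \<xi> where \<xi>: "0 < \<xi>" "\<xi> < t" "\<phi> t - \<phi> 0 = (t - 0) * (pd i u (p + t *\<^sub>R ?ej + \<xi> *\<^sub>R ?ei) - pd i u (p + \<xi> *\<^sub>R ?ei))"
    using MVT2[OF t d\<phi>] by auto
  define \<psi> where "\<psi> r = pd i u (p + \<xi> *\<^sub>R ?ei + r *\<^sub>R ?ej)" for r
  have d\<psi>: "DERIV \<psi> r :> pd j (pd i u) (p + \<xi> *\<^sub>R ?ei + r *\<^sub>R ?ej)" if "0 \<le> r" "r \<le> t" for r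
  proof -
    have i1: "p + \<xi> *\<^sub>R ?ei + r *\<^sub>R ?ej \<in> U" using inU[of \<xi> r] that \<xi> by simp
    show ?thesis unfolding \<psi>_def pd_def[of j]
      by (intro deriv_line) (use D(2) i1 in auto)
  qed
  obtain \<eta> where \<eta>: "0 < \<eta>" "\<eta> < t" "\<psi> t - \<psi> 0 = (t - 0) * pd j (pd i u) (p + \<xi> *\<^sub>R ?ei + \<eta> *\<^sub>R ?ej)"
    using MVT2[OF t d\<psi>] by auto
  define q where "q = p + \<xi> *\<^sub>R ?ei + \<eta> *\<^sub>R ?ej"
  have "dist q p \<le> 2 * t"
  proof -
    have "norm (\<xi> *\<^sub>R ?ei + \<eta> *\<^sub>R ?ej) \<le> norm (\<xi> *\<^sub>R ?ei) + norm (\<eta> *\<^sub>R ?ej)" by (rule norm_triangle_ineq)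
    also have "\<dots> \<le> 2 * t" using \<xi> \<eta> nei by simp
    finally show ?thesis by (simp add: q_def dist_norm add.assoc)
  qed
  moreover have "u (p + t *\<^sub>R ?ei + t *\<^sub>R ?ej) - u (p + t *\<^sub>R ?ei) - u (p + t *\<^sub>R ?ej) + u p
      = t^2 * pd j (pd i u) q"
  proof -
    have "u (p + t *\<^sub>R ?ei + t *\<^sub>R ?ej) - u (p + t *\<^sub>R ?ei) - u (p + t *\<^sub>R ?ej) + u p = \<phi> t - \<phi> 0"
      by (simp add: \<phi>_def algebra_simps)
    also have "\<dots> = t * (\<psi> t - \<psi> 0)" using \<xi>(3) by (simp add: \<psi>_def algebra_simps)
    also have "\<dots> = t^2 * pd j (pd i u) q" using \<eta>(3) by (simp add: q_def power2_eq_square)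
    finally show ?thesis .
  qed
  ultimately show ?thesis by blast
qed

lemma absurd3: "\<bar>(a1::real) - ap\<bar> < \<bar>ap - bp\<bar>/2 \<Longrightarrow> \<bar>b2 - bp\<bar> < \<bar>ap - bp\<bar>/2 \<Longrightarrow> a1 = b2 \<Longrightarrow> False"
  by (auto simp: abs_real_def split: if_split_asm)

lemma schwarz:
  fixes u :: "pt \<Rightarrow> real"
  assumes U: "open U" "p \<in> U" and C2: "Ck_on 2 U u"
  shows "pd j (pd i u) p = pd i (pd j u) p"
proof (rule ccontr)
  assume ne: "pd j (pd i u) p \<noteq> pd i (pd j u) p"
  define e where "e = \<bar>pd j (pd i u) p - pd i (pd j u) p\<bar> / 2"
  have e: "e > 0" using ne by (simp add: e_def)
  note D = Ck2_D[OF C2]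
  have c1: "isCont (pd j (pd i u)) p" "isCont (pd i (pd j u)) p"
    using D(3) U continuous_on_eq_continuous_at by blast+
  obtain d1 where d1: "d1 > 0" "\<And>y. dist y p < d1 \<Longrightarrow> dist (pd j (pd i u) y) (pd j (pd i u) p) < e"
    using c1(1) e unfolding continuous_at_eps_delta by blast
  obtain d2 where d2: "d2 > 0" "\<And>y. dist y p < d2 \<Longrightarrow> dist (pd i (pd j u) y) (pd i (pd j u) p) < e"
    using c1(2) e unfolding continuous_at_eps_delta by blast
  obtain d0 where d0: "d0 > 0" "cball p d0 \<subseteq> U" using U open_contains_cball by blast
  define t where "t = min d0 (min d1 d2) / 4"
  have t: "t > 0" using d0 d1 d2 by (simp add: t_def)
  have sub: "cball p (2*t) \<subseteq> U" using d0 t unfolding t_def by (auto simp: cball_def)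
  obtain q1 where q1: "dist q1 p \<le> 2*t" "u (p + t *\<^sub>R axis i 1 + t *\<^sub>R axis j 1) - u (p + t *\<^sub>R axis i 1) - u (p + t *\<^sub>R axis j 1) + u p
      = t^2 * pd j (pd i u) q1"
    using delta_mvt[OF C2 t sub, of i j] by blast
  obtain q2 where q2: "dist q2 p \<le> 2*t" "u (p + t *\<^sub>R axis j 1 + t *\<^sub>R axis i 1) - u (p + t *\<^sub>R axis j 1) - u (p + t *\<^sub>R axis i 1) + u p
      = t^2 * pd i (pd j u) q2"
    using delta_mvt[OF C2 t sub, of j i] by blast
  have "t^2 * pd j (pd i u) q1 = t^2 * pd i (pd j u) q2"
    using q1(2) q2(2) by (simp add: algebra_simps)
  then have eq: "pd j (pd i u) q1 = pd i (pd j u) q2" using t by simp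
  have "dist q1 p < d1" "dist q2 p < d2" using q1(1) q2(1) t d1 d2 unfolding t_def by auto
  then have "dist (pd j (pd i u) q1) (pd j (pd i u) p) < e" "dist (pd i (pd j u) q2) (pd i (pd j u) p) < e"
    using d1 d2 by auto
  then show False using eq unfolding e_def dist_real_def by (rule absurd3)
qed



lemma fd_expand:
  fixes f :: "pt \<Rightarrow> real"
  assumes "f differentiable at x"
  shows "frechet_derivative f (at x) v = (\<Sum>i\<in>UNIV. v$i * pd i f x)"
proof -
  have lin: "linear (frechet_derivative f (at x))" using linear_frechet_derivative[OF assms] .
  have "v = (\<Sum>i\<in>UNIV. v$i *\<^sub>R axis i 1)"
    using basis_expansion[of v] by (simp add: scalar_mult_eq_scaleR)
  then have "frechet_derivative f (at x) v = frechet_derivative f (at x) (\<Sum>i\<in>UNIV. v$i *\<^sub>R axis i 1)" by simp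
  also have "\<dots> = (\<Sum>i\<in>UNIV. v$i * frechet_derivative f (at x) (axis i 1))"
    using lin by (simp add: linear_sum linear_scale)
  finally show ?thesis by (simp add: pd_def)
qed

lemma has_derivative_G:
  fixes Y :: "pt \<Rightarrow> pt" and u :: "pt \<Rightarrow> real"
  assumes Yd: "Y differentiable at p" and ud: "\<And>i. pd i u differentiable at p"
  shows "((\<lambda>y. \<Sum>i\<in>UNIV. Y y $ i * pd i u y) has_derivative
     (\<lambda>v. \<Sum>i\<in>UNIV. Y p $ i * (\<Sum>j\<in>UNIV. v$j * pd j (pd i u) p) + frechet_derivative Y (at p) v $ i * pd i u p)) (at p)"
proof (rule has_derivative_sum)
  fix i :: 3
  have y: "((\<lambda>y. Y y $ i) has_derivative (\<lambda>v. frechet_derivative Y (at p) v $ i)) (at p)"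
    using bounded_linear.has_derivative[OF bounded_linear_vec_nth[of i], OF Yd[unfolded frechet_derivative_works]] .
  have "(pd i u has_derivative frechet_derivative (pd i u) (at p)) (at p)"
    using ud frechet_derivative_works by blast
  moreover have "frechet_derivative (pd i u) (at p) = (\<lambda>v. \<Sum>j\<in>UNIV. v$j * pd j (pd i u) p)"
    using fd_expand[OF ud] by auto
  ultimately have d: "(pd i u has_derivative (\<lambda>v. \<Sum>j\<in>UNIV. v$j * pd j (pd i u) p)) (at p)" by simp
  show "((\<lambda>y. Y y $ i * pd i u y) has_derivative
     (\<lambda>v. Y p $ i * (\<Sum>j\<in>UNIV. v$j * pd j (pd i u) p) + frechet_derivative Y (at p) v $ i * pd i u p)) (at p)"
    using has_derivative_mult[OF y d] by simp
qed

lemma bracket_u: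
  fixes X Y :: "pt \<Rightarrow> pt" and u :: "pt \<Rightarrow> real"
  assumes U: "open U" "p \<in> U" and C2: "Ck_on 2 U u"
    and Xd: "X differentiable at p" and Yd: "Y differentiable at p"
  shows "frechet_derivative (dder Y u) (at p) (X p) - frechet_derivative (dder X u) (at p) (Y p)
     = frechet_derivative u (at p) (lie X Y p)"
proof -
  note D = Ck2_D[OF C2]
  have ud: "\<And>i. pd i u differentiable at p" using D(2) U by blast
  have eqG: "frechet_derivative (dder Z u) (at p) = frechet_derivative (\<lambda>y. \<Sum>i\<in>UNIV. Z y $ i * pd i u y) (at p)"
    if Zd: "Z differentiable at p" for Z :: "pt \<Rightarrow> pt"
  proof -
    have G: "(\<lambda>y. \<Sum>i\<in>UNIV. Z y $ i * pd i u y) differentiable at p"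
      using has_derivative_G[OF Zd ud] by (auto simp: differentiable_def)
    have "frechet_derivative (\<lambda>y. \<Sum>i\<in>UNIV. Z y $ i * pd i u y) (at p) = frechet_derivative (dder Z u) (at p)"
      apply (rule frechet_derivative_transform_within_open[OF _ U(1) U(2)])
      using G apply simp
      using D(1) by (simp add: dder_def fd_expand mult.commute)
    then show ?thesis by simp
  qed
  let ?H = "\<lambda>i j. pd j (pd i u) p"
  have fdG: "frechet_derivative (\<lambda>y. \<Sum>i\<in>UNIV. Z y $ i * pd i u y) (at p) v =
     (\<Sum>i\<in>UNIV. Z p $ i * (\<Sum>j\<in>UNIV. v$j * ?H i j) + frechet_derivative Z (at p) v $ i * pd i u p)"
    if Zd: "Z differentiable at p" for Z :: "pt \<Rightarrow> pt" and v
    using fun_cong[OF frechet_derivative_at[OF has_derivative_G[OF Zd ud]], of v, symmetric] by simp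
  have sym: "?H i j = ?H j i" for i j by (rule schwarz[OF U C2])
  have swap: "(\<Sum>i\<in>UNIV. Y p $ i * (\<Sum>j\<in>UNIV. X p $j * ?H i j)) = (\<Sum>i\<in>UNIV. X p $ i * (\<Sum>j\<in>UNIV. Y p $j * ?H i j))"
  proof -
    have "(\<Sum>i\<in>UNIV. Y p $ i * (\<Sum>j\<in>UNIV. X p $j * ?H i j)) = (\<Sum>i\<in>UNIV. \<Sum>j\<in>UNIV. Y p $ i * X p $j * ?H i j)"
      by (simp add: sum_distrib_left mult.assoc)
    also have "\<dots> = (\<Sum>j\<in>UNIV. \<Sum>i\<in>UNIV. Y p $ i * X p $j * ?H i j)" by (rule sum.swap)
    also have "\<dots> = (\<Sum>j\<in>UNIV. X p $ j * (\<Sum>i\<in>UNIV. Y p $i * ?H j i))"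
      by (simp add: sum_distrib_left sym mult.assoc mult.left_commute)
    finally show ?thesis .
  qed
  have "frechet_derivative (dder Y u) (at p) (X p) - frechet_derivative (dder X u) (at p) (Y p)
     = ((\<Sum>i\<in>UNIV. Y p $ i * (\<Sum>j\<in>UNIV. X p $j * ?H i j)) + (\<Sum>i\<in>UNIV. frechet_derivative Y (at p) (X p) $ i * pd i u p))
      - ((\<Sum>i\<in>UNIV. X p $ i * (\<Sum>j\<in>UNIV. Y p $j * ?H i j)) + (\<Sum>i\<in>UNIV. frechet_derivative X (at p) (Y p) $ i * pd i u p))"
    unfolding eqG[OF Xd] eqG[OF Yd] fdG[OF Xd] fdG[OF Yd] sum.distrib by (rule refl)
  also have "\<dots> = (\<Sum>i\<in>UNIV. frechet_derivative Y (at p) (X p) $ i * pd i u p) - (\<Sum>i\<in>UNIV. frechet_derivative X (at p) (Y p) $ i * pd i u p)"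
    unfolding swap by (rule add_diff_cancel_left) 
  also have "\<dots> = (\<Sum>i\<in>UNIV. (frechet_derivative Y (at p) (X p) - frechet_derivative X (at p) (Y p)) $ i * pd i u p)"
    unfolding sum_subtractf[symmetric] by (simp only: vector_minus_component left_diff_distrib)
  also have "\<dots> = frechet_derivative u (at p) (lie X Y p)"
    unfolding lie_def using D(1) U by (intro fd_expand[symmetric]) blast
  finally show ?thesis .
qed

lemma differentiable_transform_within_open:
  assumes "f differentiable at x" "open S" "x \<in> S" "\<And>y. y \<in> S \<Longrightarrow> f y = g y"
  shows "g differentiable at x"
  using assms has_derivative_transform_within_open unfolding differentiable_def by blast



theorem lemma2p1:
  fixes U :: "pt set" and w X0 X1 X2 :: "pt \<Rightarrow> pt"
    and g :: "pt \<Rightarrow> pt \<Rightarrow> pt \<Rightarrow> real" and u :: "pt \<Rightarrow> real"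
  assumes U_open: "open U"
    and w_smooth: "smooth_vf U w"
    and contact: "\<forall>x\<in>U. wedge3 w x (axis 1 1) (axis 2 1) (axis 3 1) \<noteq> 0"
    and g_symm: "\<forall>x\<in>U. \<forall>a\<in>Dfib w x. \<forall>b\<in>Dfib w x. g x a b = g x b a"
    and g_add: "\<forall>x\<in>U. \<forall>a\<in>Dfib w x. \<forall>b\<in>Dfib w x. \<forall>c\<in>Dfib w x.
                   g x (a + b) c = g x a c + g x b c"
    and g_scal: "\<forall>x\<in>U. \<forall>a\<in>Dfib w x. \<forall>b\<in>Dfib w x. \<forall>r. g x (r *\<^sub>R a) b = r * g x a b"
    and g_pos: "\<forall>x\<in>U. \<forall>a\<in>Dfib w x. a \<noteq> 0 \<longrightarrow> g x a a > 0"
    and X0_smooth: "smooth_vf U X0"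
    and X1_smooth: "smooth_vf U X1"
    and X2_smooth: "smooth_vf U X2"
    and reeb1: "\<forall>x\<in>U. \<forall>v. dform w x (X0 x) v = 0"
    and reeb2: "\<forall>x\<in>U. w x \<bullet> X0 x = 1"
    and frame_D: "\<forall>x\<in>U. X1 x \<in> Dfib w x \<and> X2 x \<in> Dfib w x"
    and frame_on: "\<forall>x\<in>U. g x (X1 x) (X1 x) = 1 \<and> g x (X2 x) (X2 x) = 1 \<and> g x (X1 x) (X2 x) = 0"
    and dw_vol: "\<forall>x\<in>U. \<forall>a\<in>Dfib w x. \<forall>b\<in>Dfib w x. dform w x a b = - volg g X1 X2 x a b"
    and u_C2: "Ck_on 2 U u"
    and u_reg: "\<forall>x\<in>U. u x = 0 \<longrightarrow> frechet_derivative u (at x) \<noteq> (\<lambda>v. 0)"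
    and p_S: "p \<in> U" "u p = 0"
    and p_nGamma: "\<not> (dder X1 u p = 0 \<and> dder X2 u p = 0)"
  shows "lie (F1fld X1 X2 u) (F2fld X0 X1 X2 u) p =
           - (bfun X0 X1 X2 u p * hfun w g X0 (F1fld X1 X2 u) p + etafun g X0 (F1fld X1 X2 u) p)
               *\<^sub>R F1fld X1 X2 u p
           - bfun X0 X1 X2 u p *\<^sub>R F2fld X0 X1 X2 u p"
proof -
  note C2 = Ck2_D[OF u_C2]
  have udiff: "u differentiable at x" if "x \<in> U" for x using C2(1) that by blast
  have vfd: "Z differentiable at x" if "smooth_vf U Z" "x \<in> U" for Z x
  proof (rule diff_vf)
    fix j
    have "Ck_on (Suc 0) U (\<lambda>x. Z x $ j)" using that(1) unfolding smooth_vf_def smooth_fun_def by blast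
    then show "(\<lambda>y. Z y $ j) differentiable at x" using that(2) by simp
  qed
  have ddd: "dder Z u differentiable at x" if "smooth_vf U Z" "x \<in> U" for Z x
  proof -
    have "(\<lambda>y. \<Sum>i\<in>UNIV. Z y $ i * pd i u y) differentiable at x"
      using has_derivative_G[OF vfd[OF that], of u] C2(2) that(2) unfolding differentiable_def by blast
    then show ?thesis
      by (rule differentiable_transform_within_open[OF _ U_open that(2)]) (simp add: dder_def fd_expand udiff)
  qed

  have XD: "X1 x \<in> Dfib w x" "X2 x \<in> Dfib w x" if "x \<in> U" for x using frame_D that by auto
  have Dadd: "A + B \<in> Dfib w x" if "A \<in> Dfib w x" "B \<in> Dfib w x" for A B x
    using that by (simp add: Dfib_def inner_add_right)
  have Dscal: "r *\<^sub>R A \<in> Dfib w x" if "A \<in> Dfib w x" for A r x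
    using that by (simp add: Dfib_def)
  have Ddiff: "A - B \<in> Dfib w x" if "A \<in> Dfib w x" "B \<in> Dfib w x" for A B x
    using that by (simp add: Dfib_def inner_diff_right)
  have gl: "g x (s *\<^sub>R A + t *\<^sub>R B) C = s * g x A C + t * g x B C"
    if "x \<in> U" "A \<in> Dfib w x" "B \<in> Dfib w x" "C \<in> Dfib w x" for x A B C s t
    using g_add g_scal Dscal that by simp
  have g0: "g x 0 C = 0" if "x \<in> U" "C \<in> Dfib w x" for x C
    using g_scal that by (metis mult_zero_left scale_zero_left)
  have g1: "g x (s *\<^sub>R X1 x + t *\<^sub>R X2 x) (X1 x) = s" if "x \<in> U" for x s t
    using gl[OF that XD[OF that] XD(1)[OF that]] frame_on g_symm XD[OF that] that by simp
  have g2: "g x (s *\<^sub>R X1 x + t *\<^sub>R X2 x) (X2 x) = t" if "x \<in> U" for x s t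
    using gl[OF that XD[OF that] XD(2)[OF that]] frame_on g_symm XD[OF that] that by simp
  have gc: "g x (s1 *\<^sub>R X1 x + t1 *\<^sub>R X2 x) (s2 *\<^sub>R X1 x + t2 *\<^sub>R X2 x) = s1 * s2 + t1 * t2"
    if "x \<in> U" for x s1 t1 s2 t2
  proof -
    have vD: "s1 *\<^sub>R X1 x + t1 *\<^sub>R X2 x \<in> Dfib w x" "s2 *\<^sub>R X1 x + t2 *\<^sub>R X2 x \<in> Dfib w x"
      using Dadd Dscal XD[OF that] by blast+
    have "g x (s1 *\<^sub>R X1 x + t1 *\<^sub>R X2 x) (s2 *\<^sub>R X1 x + t2 *\<^sub>R X2 x) = g x (s2 *\<^sub>R X1 x + t2 *\<^sub>R X2 x) (s1 *\<^sub>R X1 x + t1 *\<^sub>R X2 x)"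
      using g_symm vD that by blast
    also have "\<dots> = s2 * g x (X1 x) (s1 *\<^sub>R X1 x + t1 *\<^sub>R X2 x) + t2 * g x (X2 x) (s1 *\<^sub>R X1 x + t1 *\<^sub>R X2 x)"
      by (rule gl[OF that XD[OF that] vD(1)])
    also have "\<dots> = s2 * s1 + t2 * t1"
      using g_symm vD XD[OF that] that g1[OF that] g2[OF that] by metis
    finally show ?thesis by simp
  qed
  have Dspan: "v = g x v (X1 x) *\<^sub>R X1 x + g x v (X2 x) *\<^sub>R X2 x" if "x \<in> U" "v \<in> Dfib w x" for x v
  proof -
    have wne: "w x \<noteq> 0" using reeb2 that by force
    have dimD: "dim (Dfib w x) = 2" unfolding Dfib_def using dim_hyperplane[OF wne] by simp
    have on: "g x (X1 x) (X1 x) = 1" "g x (X2 x) (X2 x) = 1" "g x (X1 x) (X2 x) = 0" using frame_on that by auto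
    have ne: "X1 x \<noteq> X2 x" using on by auto
    have X2ne: "X2 x \<noteq> 0" using on g0[OF that(1) XD(2)[OF that(1)]] by auto
    have notin: "X1 x \<notin> span {X2 x}"
    proof
      assume "X1 x \<in> span {X2 x}"
      then obtain k where k: "X1 x = k *\<^sub>R X2 x" by (auto simp: span_singleton)
      have "g x (X1 x) (X1 x) = k * g x (X2 x) (X1 x)" using g_scal XD[OF that(1)] that k by metis
      also have "g x (X2 x) (X1 x) = 0" using on g_symm XD[OF that(1)] that by metis
      finally show False using on by simp
    qed
    have ind: "independent {X1 x, X2 x}"
      using ne X2ne notin by (simp add: independent_insert)
    have "Dfib w x \<subseteq> span {X1 x, X2 x}"
      by (rule card_ge_dim_independent) (use XD[OF that(1)] ind dimD ne in auto)
    then have "v \<in> span {X1 x, X2 x}" using that(2) by blast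
    then obtain s t where st: "v = s *\<^sub>R X1 x + t *\<^sub>R X2 x"
      unfolding span_insert[of "X1 x"] span_singleton by (auto simp: algebra_simps)
    show ?thesis using st g1[OF that(1)] g2[OF that(1)] by simp
  qed
  have Jmap_eq: "Jmap w g x v = g x v (X1 x) *\<^sub>R X2 x - g x v (X2 x) *\<^sub>R X1 x"
    if xU: "x \<in> U" and vD: "v \<in> Dfib w x" for x v
  proof -
    let ?c = "(- g x v (X2 x)) *\<^sub>R X1 x + g x v (X1 x) *\<^sub>R X2 x"
    have ceq: "g x v (X1 x) *\<^sub>R X2 x - g x v (X2 x) *\<^sub>R X1 x = ?c" by (simp add: algebra_simps)
    have cD: "?c \<in> Dfib w x" using Dadd Dscal XD[OF xU] by blast
    have cprop: "g x v' ?c = dform w x v' v" if v': "v' \<in> Dfib w x" for v'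
    proof -
      have "g x v' ?c = g x (g x v' (X1 x) *\<^sub>R X1 x + g x v' (X2 x) *\<^sub>R X2 x) ?c"
        by (rule arg_cong[where f="\<lambda>t. g x t ?c", OF Dspan[OF xU v']])
      also have "\<dots> = g x v' (X1 x) * (- g x v (X2 x)) + g x v' (X2 x) * g x v (X1 x)"
        by (rule gc[OF xU])
      also have "\<dots> = dform w x v' v"
        using dw_vol xU vD v' unfolding volg_def by simp
      finally show ?thesis .
    qed
    have "Jmap w g x v = ?c"
      unfolding Jmap_def
    proof (rule the_equality)
      show "?c \<in> Dfib w x \<and> (\<forall>v'\<in>Dfib w x. g x v' ?c = dform w x v' v)" using cD cprop by blast
    next
      fix c assume c: "c \<in> Dfib w x \<and> (\<forall>v'\<in>Dfib w x. g x v' c = dform w x v' v)"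
      have e1: "g x c (X1 x) = g x ?c (X1 x)"
        using c cprop[OF XD(1)[OF xU]] g_symm XD[OF xU] cD xU by metis
      have e2: "g x c (X2 x) = g x ?c (X2 x)"
        using c cprop[OF XD(2)[OF xU]] g_symm XD[OF xU] cD xU by metis
      show "c = ?c" using Dspan[OF xU, of c] Dspan[OF xU cD] c e1 e2 by metis
    qed
    then show ?thesis by (rule trans[OF _ ceq[symmetric]])
  qed

  define a where "a = dder X1 u"
  define c where "c = dder X2 u"
  define z where "z = dder X0 u"
  define R where "R = (\<lambda>y. sqrt ((a y)^2 + (c y)^2))"
  define F where "F = F1fld X1 X2 u"
  define JF where "JF = (\<lambda>y. (1 / R y) *\<^sub>R (a y *\<^sub>R X1 y + c y *\<^sub>R X2 y))"
  define b where "b = bfun X0 X1 X2 u"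
  define F2 where "F2 = F2fld X0 X1 X2 u"
  have RR: "R y * R y = (a y)^2 + (c y)^2" for y by (simp add: R_def)
  have F_eq: "F = (\<lambda>y. (1 / R y) *\<^sub>R (c y *\<^sub>R X1 y - a y *\<^sub>R X2 y))"
    by (simp add: F_def F1fld_def R_def a_def c_def fun_eq_iff)
  have b_eq: "b = (\<lambda>y. z y / R y)"
    by (simp add: b_def bfun_def R_def a_def c_def z_def fun_eq_iff)
  have Frep: "F y = (c y / R y) *\<^sub>R X1 y + (- a y / R y) *\<^sub>R X2 y" for y
    by (simp add: F_eq algebra_simps divide_inverse scaleR_diff_right)
  have Jrep: "JF y = (a y / R y) *\<^sub>R X1 y + (c y / R y) *\<^sub>R X2 y" for y
    by (simp add: JF_def algebra_simps divide_inverse scaleR_add_right)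
  have F2_eq: "F2 = (\<lambda>y. b y *\<^sub>R JF y - X0 y)"
  proof
    fix y
    have k: "1 / ((a y)^2 + (c y)^2) = (1 / R y) * (1 / R y)" using RR[of y] by simp
    show "F2 y = b y *\<^sub>R JF y - X0 y"
      unfolding F2_def F2fld_def b_eq JF_def k a_def[symmetric] c_def[symmetric] z_def[symmetric]
      by (simp add: scaleR_add_right algebra_simps)
  qed

  have pU: "p \<in> U" using p_S by simp
  have ac_ne: "(a p)^2 + (c p)^2 > 0" using p_nGamma by (auto simp: a_def c_def add_pos_nonneg sum_power2_gt_zero_iff)
  have ac_or: "\<not> (a p = 0 \<and> c p = 0)" using p_nGamma by (simp add: a_def c_def)
  have Rp: "R p > 0" using ac_ne by (simp add: R_def)
  have dX0: "X0 differentiable at p" and dX1: "X1 differentiable at p" and dX2: "X2 differentiable at p"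
    and dw: "w differentiable at p"
    using vfd X0_smooth X1_smooth X2_smooth w_smooth pU by auto
  have da: "a differentiable at y" and dc: "c differentiable at y" and dz: "z differentiable at y"
    if "y \<in> U" for y using ddd X0_smooth X1_smooth X2_smooth that by (auto simp: a_def c_def z_def)
  have cont_s: "continuous_on U (\<lambda>y. (a y)^2 + (c y)^2)"
  proof (rule continuous_at_imp_continuous_on, intro ballI)
    fix y assume "y \<in> U"
    then have "(\<lambda>y. (a y)^2 + (c y)^2) differentiable at y" using da dc by auto
    then show "isCont (\<lambda>y. (a y)^2 + (c y)^2) y" by (rule differentiable_imp_continuous_within)
  qed
  define U' where "U' = U \<inter> (\<lambda>y. (a y)^2 + (c y)^2) -` {0<..}"
  have U'open: "open U'" unfolding U'_def by (rule continuous_open_preimage[OF cont_s U_open]) simp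
  have pU': "p \<in> U'" using pU ac_ne by (simp add: U'_def)
  have U'U: "U' \<subseteq> U" by (auto simp: U'_def)
  have dsqrt: "sqrt differentiable at ((a p)^2 + (c p)^2)"
    using DERIV_real_sqrt[OF ac_ne] unfolding has_field_derivative_def differentiable_def by blast
  have dR: "R differentiable at p"
    unfolding R_def by (rule differentiable_compose[where g="\<lambda>y. (a y)^2 + (c y)^2" and x=p, OF dsqrt]) (use da dc pU in auto)
  have dF: "F differentiable at p"
    unfolding F_eq using dR Rp da dc dX1 dX2 pU by (intro derivative_intros) auto
  have dJ: "JF differentiable at p"
    unfolding JF_def using dR Rp da dc dX1 dX2 pU by (intro derivative_intros) auto
  have db: "b differentiable at p"
    unfolding b_eq using dR Rp dz pU by (intro derivative_intros) auto
  have dbJ: "(\<lambda>y. b y *\<^sub>R JF y) differentiable at p" using db dJ by simp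
  have dF2: "F2 differentiable at p" unfolding F2_eq using dbJ dX0 by simp

  define L where "L = lie F JF p"
  define Q where "Q = lie X0 F p"
  define \<beta> where "\<beta> = frechet_derivative b (at p) (F p)"
  have LIE: "lie F F2 p = b p *\<^sub>R L + \<beta> *\<^sub>R JF p + Q"
  proof -
    have 1: "frechet_derivative F2 (at p) (F p) = b p *\<^sub>R frechet_derivative JF (at p) (F p) + \<beta> *\<^sub>R JF p - frechet_derivative X0 (at p) (F p)"
      unfolding F2_eq \<beta>_def using fd_diff[OF dbJ dX0, of "F p"] fd_scaleR[OF db dJ, of "F p"] by simp
    have 2: "frechet_derivative F (at p) (F2 p) = b p *\<^sub>R frechet_derivative F (at p) (JF p) - frechet_derivative F (at p) (X0 p)"
      unfolding F2_eq using fd_lin[OF dF] by simp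
    show ?thesis unfolding lie_def L_def Q_def 1 2 by (simp add: algebra_simps)
  qed
  have wl: "w p \<bullet> lie X Y p = - dform w p (X p) (Y p)"
    if dX: "X differentiable at p" and dY: "Y differentiable at p"
      and cX: "\<And>y. y \<in> U \<Longrightarrow> w y \<bullet> X y = k1" and cY: "\<And>y. y \<in> U \<Longrightarrow> w y \<bullet> Y y = k2"
    for X Y :: "pt \<Rightarrow> pt" and k1 k2
  proof -
    have eX: "w p \<bullet> frechet_derivative X (at p) v + frechet_derivative w (at p) v \<bullet> X p = 0" for v
      using fd_inner[OF dw dX, of v] fd_local_const[OF U_open pU, of "\<lambda>y. w y \<bullet> X y", OF cX] by simp
    have eY: "w p \<bullet> frechet_derivative Y (at p) v + frechet_derivative w (at p) v \<bullet> Y p = 0" for v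
      using fd_inner[OF dw dY, of v] fd_local_const[OF U_open pU, of "\<lambda>y. w y \<bullet> Y y", OF cY] by simp
    show ?thesis unfolding lie_def dform_def inner_diff_right
      using eX[of "Y p"] eY[of "X p"] by (simp add: inner_commute)
  qed
  have FD: "F y \<in> Dfib w y" and JD: "JF y \<in> Dfib w y" if "y \<in> U" for y
    unfolding Frep Jrep using Dadd Dscal XD[OF that] by blast+
  have wF: "w y \<bullet> F y = 0" and wJ: "w y \<bullet> JF y = 0" if "y \<in> U" for y
    using FD[OF that] JD[OF that] by (auto simp: Dfib_def)
  have gFF: "g p (F p) (F p) = 1"
  proof -
    have "g p (F p) (F p) = (c p / R p) * (c p / R p) + (- a p / R p) * (- a p / R p)"
      unfolding Frep by (rule gc[OF pU])
    also have "\<dots> = ((a p)^2 + (c p)^2) / (R p * R p)" by (simp add: power2_eq_square add_divide_distrib diff_divide_distrib)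
    finally show ?thesis using RR[of p] ac_ne ac_or by simp
  qed
  have gJF: "g p (JF p) (F p) = 0"
  proof -
    have "g p (JF p) (F p) = (a p / R p) * (c p / R p) + (c p / R p) * (- a p / R p)"
      unfolding Frep Jrep by (rule gc[OF pU])
    then show ?thesis by simp
  qed
  have volFJ: "volg g X1 X2 p (F p) (JF p) = 1"
  proof -
    have "volg g X1 X2 p (F p) (JF p) = (c p / R p) * (c p / R p) - (- a p / R p) * (a p / R p)"
      unfolding volg_def Frep Jrep g1[OF pU] g2[OF pU] by simp
    also have "\<dots> = ((a p)^2 + (c p)^2) / (R p * R p)" by (simp add: power2_eq_square add_divide_distrib diff_divide_distrib)
    finally show ?thesis using RR[of p] ac_ne ac_or by simp
  qed
  have wL: "w p \<bullet> L = 1"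
    unfolding L_def using wl[OF dF dJ wF wJ] dw_vol FD[OF pU] JD[OF pU] pU volFJ by simp
  have wQ: "w p \<bullet> Q = 0"
    unfolding Q_def using wl[OF dX0 dF, of 1 0] reeb2 wF reeb1 pU by simp

  have JmU: "Jmap w g y (F y) = JF y" if "y \<in> U" for y
  proof -
    have "Jmap w g y (F y) = g y (F y) (X1 y) *\<^sub>R X2 y - g y (F y) (X2 y) *\<^sub>R X1 y"
      by (rule Jmap_eq[OF that FD[OF that]])
    also have "\<dots> = (c y / R y) *\<^sub>R X2 y - (- a y / R y) *\<^sub>R X1 y"
      unfolding Frep g1[OF that] g2[OF that] by simp
    also have "\<dots> = JF y" unfolding Jrep by (simp add: algebra_simps)
    finally show ?thesis .
  qed
  have lieJ: "lie F (\<lambda>y. Jmap w g y (F y)) p = L"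
  proof -
    have "frechet_derivative JF (at p) = frechet_derivative (\<lambda>y. Jmap w g y (F y)) (at p)"
      by (rule frechet_derivative_transform_within_open[OF dJ U_open pU]) (simp add: JmU)
    then show ?thesis unfolding lie_def L_def using JmU[OF pU] by simp
  qed
  define P where "P = L - X0 p"
  have hval: "hfun w g X0 F p = - g p P (F p)"
    unfolding hfun_def lieJ projD_def P_def wL by simp
  have etaval: "etafun g X0 F p = - g p Q (F p)"
    unfolding etafun_def Q_def by simp
  have PD: "P \<in> Dfib w p" using wL reeb2 pU by (simp add: P_def Dfib_def inner_diff_right)
  have QD: "Q \<in> Dfib w p" using wQ by (simp add: Dfib_def)
  have gadd': "g x (A + B) C = g x A C + g x B C" if "x \<in> U" "A \<in> Dfib w x" "B \<in> Dfib w x" "C \<in> Dfib w x" for x A B C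
    using g_add that by blast
  have gsc': "g x (r *\<^sub>R A) C = r * g x A C" if "x \<in> U" "A \<in> Dfib w x" "C \<in> Dfib w x" for x A C r
    using g_scal that by blast
  have uX: "frechet_derivative u (at y) (s *\<^sub>R X1 y + t *\<^sub>R X2 y) = s * a y + t * c y" if "y \<in> U" for y s t
    using fd_lin[OF udiff[OF that]] by (simp add: a_def c_def dder_def)
  have vanish: "V = 0" if VD: "V \<in> Dfib w p" and Vg: "g p V (F p) = 0" and Vu: "frechet_derivative u (at p) V = 0" for V
  proof -
    define v1 where "v1 = g p V (X1 p)"
    define v2 where "v2 = g p V (X2 p)"
    have Ve: "V = v1 *\<^sub>R X1 p + v2 *\<^sub>R X2 p" unfolding v1_def v2_def by (rule Dspan[OF pU VD])
    have "g p V (F p) = g p (v1 *\<^sub>R X1 p + v2 *\<^sub>R X2 p) ((c p / R p) *\<^sub>R X1 p + (- a p / R p) *\<^sub>R X2 p)"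
      by (simp only: Ve Frep)
    also have "\<dots> = v1 * (c p / R p) + v2 * (- a p / R p)" by (rule gc[OF pU])
    finally have e1: "v1 * (c p / R p) + v2 * (- a p / R p) = 0" using Vg by simp
    have e1': "v1 * c p - v2 * a p = 0"
    proof -
      have "(v1 * (c p / R p) + v2 * (- a p / R p)) * R p = v1 * c p - v2 * a p" using Rp by (simp add: field_simps)
      then show ?thesis using e1 Rp by simp
    qed
    have e2: "v1 * a p + v2 * c p = 0" using Vu by (subst (asm) Ve) (simp add: uX[OF pU])
    have "v1 * ((a p)^2 + (c p)^2) = 0"
    proof -
      have "v1 * ((a p)^2 + (c p)^2) = a p * (v1 * a p + v2 * c p) + c p * (v1 * c p - v2 * a p)"
        by (simp add: algebra_simps power2_eq_square)
      then show ?thesis using e1' e2 by simp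
    qed
    moreover have "v2 * ((a p)^2 + (c p)^2) = 0"
    proof -
      have "v2 * ((a p)^2 + (c p)^2) = c p * (v1 * a p + v2 * c p) - a p * (v1 * c p - v2 * a p)"
        by (simp add: algebra_simps power2_eq_square)
      then show ?thesis using e1' e2 by simp
    qed
    ultimately have "v1 = 0" "v2 = 0" using ac_ne by auto
    then show ?thesis using Ve by simp
  qed

  have FU0: "dder F u y = 0" if "y \<in> U" for y
    unfolding dder_def Frep uX[OF that] by (simp add: algebra_simps)
  have F2U0: "dder F2 u y = 0" if "y \<in> U'" for y
  proof -
    have yU: "y \<in> U" using that U'U by blast
    have pos: "(a y)^2 + (c y)^2 > 0" using that by (simp add: U'_def)
    have Ry: "R y > 0" using pos by (simp add: R_def)
    have "dder F2 u y = frechet_derivative u (at y) ((b y * (a y / R y)) *\<^sub>R X1 y + (b y * (c y / R y)) *\<^sub>R X2 y) - z y"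
      unfolding dder_def F2_eq Jrep fd_lin(2)[OF udiff[OF yU]] by (simp add: z_def dder_def scaleR_add_right)
    also have "\<dots> = b y * (((a y)^2 + (c y)^2) / R y) - z y"
      unfolding uX[OF yU] by (simp add: algebra_simps power2_eq_square add_divide_distrib)
    also have "((a y)^2 + (c y)^2) / R y = R y" using RR[of y] Ry by (simp add: field_simps)
    finally show ?thesis using Ry by (simp add: b_eq)
  qed
  have Du_lie: "frechet_derivative u (at p) (lie F F2 p) = 0"
  proof -
    have "frechet_derivative u (at p) (lie F F2 p) = frechet_derivative (dder F2 u) (at p) (F p) - frechet_derivative (dder F u) (at p) (F2 p)"
      using bracket_u[OF U_open pU u_C2 dF dF2] by simp
    also have "\<dots> = 0"
      using fd_local_const[OF U'open pU', of "dder F2 u" 0, OF F2U0] fd_local_const[OF U_open pU, of "dder F u" 0, OF FU0] by simp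
    finally show ?thesis .
  qed
  have uF: "frechet_derivative u (at p) (F p) = 0" using FU0[OF pU] by (simp add: dder_def)
  have uF2: "frechet_derivative u (at p) (F2 p) = 0" using F2U0[OF pU'] by (simp add: dder_def)
  define h where "h = hfun w g X0 F p"
  define \<eta> where "\<eta> = etafun g X0 F p"
  define V where "V = lie F F2 p - (- (b p * h + \<eta>) *\<^sub>R F p - b p *\<^sub>R F2 p)"
  have Vexp: "V = b p *\<^sub>R P + (\<beta> + b p * b p) *\<^sub>R JF p + 1 *\<^sub>R Q + (b p * h + \<eta>) *\<^sub>R F p"
    unfolding V_def LIE P_def using F2_eq by (simp add: algebra_simps)
  have mem: "P \<in> Dfib w p" "JF p \<in> Dfib w p" "Q \<in> Dfib w p" "F p \<in> Dfib w p"
    using PD QD JD[OF pU] FD[OF pU] by auto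
  have VD: "V \<in> Dfib w p" unfolding Vexp using mem Dadd Dscal by meson
  have Vg: "g p V (F p) = 0"
  proof -
    have "g p V (F p) = b p * g p P (F p) + (\<beta> + b p * b p) * g p (JF p) (F p) + 1 * g p Q (F p) + (b p * h + \<eta>) * g p (F p) (F p)"
      unfolding Vexp using mem by (simp add: gadd'[OF pU] gsc'[OF pU] Dadd Dscal del: scaleR_one)
    then show ?thesis using hval etaval gJF gFF unfolding h_def \<eta>_def by (simp add: algebra_simps)
  qed
  have Vu: "frechet_derivative u (at p) V = 0"
    unfolding V_def using fd_lin[OF udiff[OF pU]] Du_lie uF uF2 by simp
  have "V = 0" by (rule vanish[OF VD Vg Vu])
  then show ?thesis unfolding F_def[symmetric] F2_def[symmetric] b_def[symmetric] h_def[symmetric] \<eta>_def[symmetric]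
    by (simp add: V_def)
qed

end
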